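(* Let $\Omega$ be a finite set, let $\mathcal K$ be a finite nonempty set of gambles on $\Omega$, and let $\underline{P}_{\mathcal K}$ be a coherent lower prevision on $\mathcal K$. Let $\mathcal M=\{P: P(f)\ge\underline{P}_{\mathcal K}(f)\ \forall f\in\mathcal K\}$ be its credal set, $\operatorname{ext}(\mathcal M)$ its set of extreme points, and $\underline{E}(h)=\min_{P\in\mathcal M}P(h)$ its natural extension. For $f\in\mathcal K$ let $\mathcal M_f=\{P\in\mathcal M: P(f)=\underline{E}(f)\}$ and let $\mathcal E_f$ be the set of extreme points of $\mathcal M_f$. For $E\in\mathcal M$ let $N_{\mathcal M}(E)=\{h: E(h)=\underline{E}(h)\}$, and for linear previsions $E\in\mathcal M$, $F$ define $$d_E(E,F)=\max_{h\in N_{\mathcal M}(E),\,h\neq 0}\frac{F(h)-E(h)}{\|h\|}.$$ Let $\underline{P}$ be any coherent lower prevision on the set of all gambles with $\underline{P}(f)=\underline{P}_{\mathcal K}(f)$ for all $f\in\mathcal K$. Then $$d(\underline{P},\underline{E}):=\max_{\|h\|=1}|\underline{P}(h)-\underline{E}(h)|\le\max_{E\in\operatorname{ext}(\mathcal M)}\ \min_{f\in\mathcal K}\ \max_{F\in\mathcal E_f}d_E(E,F).$$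
   Context: Gambles are real-valued functions on the finite set $\Omega$, identified with vectors in $\mathbb{R}^{\Omega}$, with Euclidean norm $\|h\|=\sqrt{\sum_{x}h(x)^2}$. A linear prevision is the expectation functional $P(f)=\sum_{x}p(x)f(x)$ of a probability mass vector $p$. A lower prevision $\underline{P}$ on a set of gambles $\mathcal H$ is coherent if there is a nonempty closed convex set $\mathcal C$ of linear previsions with $\underline{P}(f)=\min_{P\in\mathcal C}P(f)$ for all $f\in\mathcal H$. Since $\mathcal K$ is finite, $\mathcal M$ is a convex polytope. *)

theory Defs
  imports "HOL-Analysis.Analysis"
begin

text \<open>Omega is a finite type 'n; gambles are vectors in real^'n with Euclidean norm.
  A linear prevision is given by its probability mass vector p; P(f) = p \<bullet> f.\<close>

definition lin_prev :: "real^'n \<Rightarrow> bool" where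
  "lin_prev p \<longleftrightarrow> (\<forall>x. 0 \<le> p $ x) \<and> (\<Sum>x\<in>UNIV. p $ x) = 1"

definition prev :: "real^'n \<Rightarrow> real^'n \<Rightarrow> real" where
  "prev p f = (\<Sum>x\<in>UNIV. p $ x * f $ x)"

definition coherent_on :: "(real^'n) set \<Rightarrow> (real^'n \<Rightarrow> real) \<Rightarrow> bool" where
  "coherent_on H LP \<longleftrightarrow> (\<exists>C. C \<noteq> {} \<and> closed C \<and> convex C \<and> (\<forall>p\<in>C. lin_prev p) \<and>
     (\<forall>f\<in>H. (\<exists>p\<in>C. prev p f = LP f) \<and> (\<forall>p\<in>C. LP f \<le> prev p f)))"

definition credal :: "(real^'n) set \<Rightarrow> (real^'n \<Rightarrow> real) \<Rightarrow> (real^'n) set" where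
  "credal K LP = {p. lin_prev p \<and> (\<forall>f\<in>K. LP f \<le> prev p f)}"

text \<open>Natural extension: lower envelope (a minimum, since M is compact).\<close>
definition natext :: "(real^'n) set \<Rightarrow> real^'n \<Rightarrow> real" where
  "natext M h = (INF p\<in>M. prev p h)"

definition face_at :: "(real^'n) set \<Rightarrow> real^'n \<Rightarrow> (real^'n) set" where
  "face_at M f = {p\<in>M. prev p f = natext M f}"

definition normal_set :: "(real^'n) set \<Rightarrow> real^'n \<Rightarrow> (real^'n) set" where
  "normal_set M e = {h. prev e h = natext M h}"

definition dE :: "(real^'n) set \<Rightarrow> real^'n \<Rightarrow> real^'n \<Rightarrow> real" where
  "dE M e F = (SUP h\<in>normal_set M e - {0}. (prev F h - prev e h) / norm h)"

definition dist_lp :: "(real^'n \<Rightarrow> real) \<Rightarrow> (real^'n \<Rightarrow> real) \<Rightarrow> real" where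
  "dist_lp P Q = (SUP h\<in>{h. norm h = 1}. \<bar>P h - Q h\<bar>)"

end

theory Submission
  imports Defs
begin

lemma prev_inner: "prev p f = inner p f"
  by (simp add: prev_def inner_vec_def)

lemma prev_bound:
  assumes "lin_prev p" shows "\<bar>prev p h\<bar> \<le> norm h"
proof -
  have "\<bar>prev p h\<bar> \<le> (\<Sum>x\<in>UNIV. \<bar>p $ x * h $ x\<bar>)"
    unfolding prev_def by (rule sum_abs)
  also have "\<dots> \<le> (\<Sum>x\<in>UNIV. p $ x * norm h)"
    using assms unfolding lin_prev_def
    by (intro sum_mono) (simp add: abs_mult mult_left_mono component_le_norm_cart)
  also have "\<dots> = norm h" using assms unfolding lin_prev_def by (simp add: sum_distrib_right[symmetric])
  finally show ?thesis .
qed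

lemma ext_ge:
  fixes S :: "(real^'n) set"
  assumes "compact S" "convex S" "p \<in> S"
  shows "\<exists>x. x extreme_point_of S \<and> inner p h \<le> inner x h"
proof (rule ccontr)
  assume "\<not> ?thesis"
  hence "{x. x extreme_point_of S} \<subseteq> {x. inner h x < inner p h}"
    by (auto simp: inner_commute)
  hence "convex hull {x. x extreme_point_of S} \<subseteq> {x. inner h x < inner p h}"
    by (intro hull_minimal convex_halfspace_lt)
  with Krein_Milman_Minkowski[OF assms(1,2)] assms(3) show False
    by (auto simp: inner_commute)
qed

lemma ext_le:
  fixes S :: "(real^'n) set"
  assumes "compact S" "convex S" "p \<in> S"
  shows "\<exists>x. x extreme_point_of S \<and> inner x h \<le> inner p h"
  using ext_ge[OF assms, of "-h"] by auto

lemma credal_compact: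
  fixes K :: "(real^'n) set"
  shows "compact (credal K LP)"
proof -
  have cl: "closed (credal K LP)"
  proof -
    have "credal K LP = (\<Inter>x. {p. 0 \<le> p $ x}) \<inter> {p. (\<Sum>x\<in>UNIV. p $ x) = 1}
        \<inter> (\<Inter>f\<in>K. {p. LP f \<le> inner p f})"
      by (auto simp: credal_def lin_prev_def prev_inner)
    moreover have "closed {p::real^'n. (\<Sum>x\<in>UNIV. p $ x) = 1}"
      by (intro closed_Collect_eq continuous_intros)
    moreover have "\<And>x. closed {p::real^'n. 0 \<le> p $ x}"
      by (intro closed_Collect_le continuous_intros)
    moreover have "\<And>f. closed {p::real^'n. LP f \<le> inner p f}"
      by (intro closed_Collect_le continuous_intros)
    ultimately show ?thesis by (auto intro!: closed_Int closed_INT)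
  qed
  have "bounded (credal K LP)"
    unfolding bounded_iff
  proof (intro exI ballI)
    fix p assume "p \<in> credal K LP"
    hence "lin_prev p" by (simp add: credal_def)
    have "norm p \<le> (\<Sum>x\<in>UNIV. \<bar>p $ x\<bar>)" by (rule norm_le_l1_cart)
    also have "\<dots> = 1" using \<open>lin_prev p\<close> by (simp add: lin_prev_def)
    finally show "norm p \<le> 1" .
  qed
  with cl show ?thesis by (simp add: compact_eq_bounded_closed)
qed

lemma credal_convex:
  fixes K :: "(real^'n) set"
  shows "convex (credal K LP)"
  unfolding convex_def
proof (intro ballI allI impI)
  fix p q :: "real^'n" and u v :: real
  assume p: "p \<in> credal K LP" and q: "q \<in> credal K LP" and uv: "0 \<le> u" "0 \<le> v" "u + v = 1"
  have "lin_prev (u *\<^sub>R p + v *\<^sub>R q)"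
    using p q uv unfolding credal_def lin_prev_def
    by (auto simp: sum.distrib sum_distrib_left[symmetric])
  moreover have "LP f \<le> prev (u *\<^sub>R p + v *\<^sub>R q) f" if "f \<in> K" for f
  proof -
    have "LP f = u * LP f + v * LP f" using uv by (metis distrib_right mult_1)
    also have "\<dots> \<le> u * prev p f + v * prev q f"
      using p q that uv unfolding credal_def by (auto intro!: add_mono mult_left_mono)
    finally show ?thesis by (simp add: prev_inner inner_add_left)
  qed
  ultimately show "u *\<^sub>R p + v *\<^sub>R q \<in> credal K LP" by (simp add: credal_def)
qed

lemma ratio_le2:
  assumes "lin_prev e" "lin_prev F"
  shows "(prev F h - prev e h) / norm h \<le> 2"
proof (cases "h = 0")
  case True then show ?thesis by simp
next
  case False
  have "prev F h - prev e h \<le> 2 * norm h"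
    using prev_bound[OF assms(1), of h] prev_bound[OF assms(2), of h] by linarith
  thus ?thesis using False by (simp add: divide_le_eq)
qed

lemma dE_upper:
  assumes "lin_prev e" "lin_prev F" "h \<in> normal_set M e" "h \<noteq> 0"
  shows "(prev F h - prev e h) / norm h \<le> dE M e F"
  unfolding dE_def
  by (rule cSUP_upper) (use assms ratio_le2 in \<open>auto intro!: bdd_aboveI2\<close>)

lemma dE_le2:
  assumes "lin_prev e" "lin_prev F" "normal_set M e - {0} \<noteq> {}"
  shows "dE M e F \<le> 2"
  unfolding dE_def
  by (rule cSUP_least) (use assms ratio_le2 in auto)

lemma natext_le:
  fixes K :: "(real^'n) set"
  assumes "p \<in> credal K LP"
  shows "natext (credal K LP) h \<le> prev p h"
  unfolding natext_def
proof (rule cINF_lower[OF _ assms])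
  show "bdd_below ((\<lambda>p. prev p h) ` credal K LP)"
    by (rule bdd_belowI2[where m="- norm h"])
       (use prev_bound in \<open>metis (no_types, lifting) abs_le_iff credal_def mem_Collect_eq minus_le_iff\<close>)
qed

lemma natext_attained:
  fixes K :: "(real^'n) set"
  assumes "credal K LP \<noteq> {}"
  shows "\<exists>p\<in>credal K LP. natext (credal K LP) h = prev p h"
proof -
  have "continuous_on (credal K LP) (\<lambda>p. prev p h)"
    unfolding prev_inner by (intro continuous_intros)
  from continuous_attains_inf[OF credal_compact assms this]
  obtain p where p: "p \<in> credal K LP" "\<And>q. q \<in> credal K LP \<Longrightarrow> prev p h \<le> prev q h" by blast
  have "natext (credal K LP) h \<ge> prev p h"
    unfolding natext_def by (rule cINF_greatest[OF assms]) (use p in auto)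
  with natext_le[OF p(1), of h] p(1) show ?thesis by (intro bexI[of _ p]) auto
qed

lemma face_cc:
  fixes K :: "(real^'n) set"
  shows "compact (face_at (credal K LP) f) \<and> convex (face_at (credal K LP) f)"
proof -
  have eq: "face_at (credal K LP) f = credal K LP \<inter> {p. inner f p = natext (credal K LP) f}"
    by (auto simp: face_at_def prev_inner inner_commute)
  have "closed {p::real^'n. inner f p = natext (credal K LP) f}"
    by (intro closed_Collect_eq continuous_intros)
  thus ?thesis unfolding eq
    by (intro conjI compact_Int_closed credal_compact convex_Int credal_convex convex_hyperplane)
qed

lemma ext_mem: "x extreme_point_of S \<Longrightarrow> x \<in> S"
  by (simp add: extreme_point_of_def)

lemma one_normal:
  fixes K :: "(real^'n) set"
  assumes "lin_prev e" "credal K LP \<noteq> {}"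
  shows "(1::real^'n) \<in> normal_set (credal K LP) e - {0}"
proof -
  have p1: "prev q 1 = 1" if "lin_prev q" for q :: "real^'n"
    using that by (simp add: prev_def lin_prev_def)
  have "natext (credal K LP) 1 = (INF p\<in>credal K LP. (1::real))"
    unfolding natext_def by (intro INF_cong refl) (simp add: p1 credal_def)
  also have "\<dots> = 1" using assms(2) by simp
  finally show ?thesis using p1[OF assms(1)] by (simp add: normal_set_def)
qed

theorem mainTheorem7:
  fixes K :: "(real^'n) set" and LPK :: "real^'n \<Rightarrow> real" and LP :: "real^'n \<Rightarrow> real"
  assumes "finite K" and "K \<noteq> {}" and "coherent_on K LPK"
    and "coherent_on UNIV LP" and "\<forall>f\<in>K. LP f = LPK f"
  shows "dist_lp LP (natext (credal K LPK))
    \<le> (SUP e\<in>{e. e extreme_point_of credal K LPK}.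
          INF f\<in>K. SUP F\<in>{F. F extreme_point_of face_at (credal K LPK) f}.
             dE (credal K LPK) e F)"
proof -
  define M where "M = credal K LPK"
  obtain C where C: "C \<noteq> {}" "\<forall>p\<in>C. lin_prev p"
    "\<And>f. \<exists>p\<in>C. prev p f = LP f" "\<And>f p. p \<in> C \<Longrightarrow> LP f \<le> prev p f"
    using assms(4) unfolding coherent_on_def by blast
  have CM: "C \<subseteq> M"
  proof
    fix p assume p: "p \<in> C"
    have "\<forall>f\<in>K. LPK f \<le> prev p f" using C(4)[OF p] assms(5) by metis
    thus "p \<in> M" using C(2) p by (simp add: M_def credal_def)
  qed
  have Mne: "M \<noteq> {}" using C(1) CM by blast
  have Mlin: "\<And>p. p \<in> M \<Longrightarrow> lin_prev p" by (simp add: M_def credal_def)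
  have extF_ne: "{F. F extreme_point_of face_at M f} \<noteq> {}" for f
  proof -
    obtain p where p: "p \<in> M" "natext M f = prev p f"
      using natext_attained[OF Mne[unfolded M_def], of f] unfolding M_def by blast
    hence "p \<in> face_at M f" by (simp add: face_at_def)
    then obtain F where "F extreme_point_of face_at M f"
      using ext_ge[of "face_at M f" p f] face_cc unfolding M_def by blast
    thus ?thesis by blast
  qed
  have faceM: "face_at M f \<subseteq> M" for f by (auto simp: face_at_def)
  have bndSUP: "(SUP F\<in>{F. F extreme_point_of face_at M f}. dE M e F) \<le> 2"
    if "lin_prev e" for e f
    by (rule cSUP_least[OF extF_ne])
       (use that faceM Mlin one_normal[OF that Mne[unfolded M_def]] in
         \<open>auto simp: M_def intro!: dE_le2 dest!: ext_mem\<close>)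
  obtain f0 where f0: "f0 \<in> K" using assms(2) by blast
  have bddOut: "bdd_above ((\<lambda>e. INF f\<in>K. SUP F\<in>{F. F extreme_point_of face_at M f}. dE M e F)
      ` {e. e extreme_point_of M})"
  proof (rule bdd_aboveI2[where M=2])
    fix e assume "e \<in> {e. e extreme_point_of M}"
    hence le: "lin_prev e" using Mlin ext_mem by blast
    have "(INF f\<in>K. SUP F\<in>{F. F extreme_point_of face_at M f}. dE M e F)
        \<le> (SUP F\<in>{F. F extreme_point_of face_at M f0}. dE M e F)"
      by (rule cINF_lower[OF _ f0]) (use assms(1) in simp)
    also have "\<dots> \<le> 2" by (rule bndSUP[OF le])
    finally show "(INF f\<in>K. SUP F\<in>{F. F extreme_point_of face_at M f}. dE M e F) \<le> 2" .
  qed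
  have natK: "natext M f = LPK f" if "f \<in> K" for f
  proof -
    obtain P where P: "P \<in> C" "prev P f = LP f" using C(3) by blast
    have "natext M f \<le> LPK f"
      using natext_le[of P K LPK f] P CM assms(5) that by (auto simp: M_def)
    moreover have "natext M f \<ge> LPK f"
      unfolding natext_def by (rule cINF_greatest[OF Mne]) (use that in \<open>auto simp: M_def credal_def\<close>)
    ultimately show ?thesis by simp
  qed
  have main: "\<bar>LP h - natext M h\<bar> \<le> (SUP e\<in>{e. e extreme_point_of M}.
          INF f\<in>K. SUP F\<in>{F. F extreme_point_of face_at M f}. dE M e F)"
    if h1: "norm h = 1" for h
  proof -
    have h0: "h \<noteq> 0" using h1 by auto
    obtain p0 where p0: "p0 \<in> M" "natext M h = prev p0 h"
      using natext_attained[OF Mne[unfolded M_def], of h] unfolding M_def by blast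
    obtain E where E: "E extreme_point_of M" "inner E h \<le> inner p0 h"
      using ext_le[of M p0 h] p0(1) credal_compact credal_convex unfolding M_def by blast
    have EM: "E \<in> M" using E(1) ext_mem by blast
    have Eh: "prev E h = natext M h"
      using natext_le[of E K LPK h] EM E(2) p0(2) by (simp add: M_def prev_inner)
    have hN: "h \<in> normal_set M E" using Eh by (simp add: normal_set_def)
    obtain q where q: "q \<in> C" "prev q h = LP h" using C(3) by blast
    have ge: "natext M h \<le> LP h"
      using natext_le[of q K LPK h] q CM by (auto simp: M_def)
    have "LP h - natext M h \<le> (INF f\<in>K. SUP F\<in>{F. F extreme_point_of face_at M f}. dE M E F)"
    proof (rule cINF_greatest[OF assms(2)])
      fix f assume f: "f \<in> K"
      obtain P where P: "P \<in> C" "prev P f = LP f" using C(3) by blast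
      have Pf: "P \<in> face_at M f"
        using P CM natK[OF f] assms(5) f by (auto simp: face_at_def)
      obtain F where F: "F extreme_point_of face_at M f" "inner P h \<le> inner F h"
        using ext_ge[of "face_at M f" P h] Pf face_cc unfolding M_def by blast
      have FM: "F \<in> M" using F(1) ext_mem faceM by blast
      have "LP h - natext M h \<le> prev F h - prev E h"
        using C(4)[OF P(1), of h] F(2) Eh by (simp add: prev_inner)
      also have "\<dots> = (prev F h - prev E h) / norm h" using h1 by simp
      also have "\<dots> \<le> dE M E F"
        by (rule dE_upper[OF Mlin[OF EM] Mlin[OF FM] hN h0])
      also have "\<dots> \<le> (SUP F\<in>{F. F extreme_point_of face_at M f}. dE M E F)"
      proof (rule cSUP_upper)
        show "F \<in> {F. F extreme_point_of face_at M f}" using F(1) by simp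
        show "bdd_above ((\<lambda>F. dE M E F) ` {F. F extreme_point_of face_at M f})"
          by (rule bdd_aboveI2[where M=2])
             (use Mlin EM hN h0 faceM in \<open>auto intro!: dE_le2 dest!: ext_mem\<close>)
      qed
      finally show "LP h - natext M h \<le> (SUP F\<in>{F. F extreme_point_of face_at M f}. dE M E F)" .
    qed
    also have "\<dots> \<le> (SUP e\<in>{e. e extreme_point_of M}.
          INF f\<in>K. SUP F\<in>{F. F extreme_point_of face_at M f}. dE M e F)"
      by (rule cSUP_upper[OF _ bddOut]) (use E(1) in simp)
    finally show ?thesis using ge by simp
  qed
  have sne: "{h::real^'n. norm h = 1} \<noteq> {}"
    using norm_axis_1 by blast
  show ?thesis
    unfolding dist_lp_def M_def[symmetric]
    by (rule cSUP_least[OF sne]) (use main in auto)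
qed

end
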